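(* Let $V$ be a finite set, $\mathcal{F}\subseteq 2^V$ a minimal hereditary family with $\delta(\mathcal{F})\ge 12$, and let $x\in V$ be mini-weight. Then: (1) $|\mathcal{Q}(x)|=2$; (2) writing $\mathcal{Q}(x)=\{Q_1,Q_2\}$, we have $|Q_1\cap Q_2|=3$ and $\mathcal{F}(x)=\{F\setminus\{x\}: x\in F\subseteq Q_i \text{ for some } i\in\{1,2\}\}$; (3) $u(x)=5.3-\frac{2}{15}$.
   Context: Let $V$ be a finite set. A family $\mathcal{F}\subseteq 2^V$ is hereditary if $F'\subseteq F\in\mathcal{F}$ implies $F'\in\mathcal{F}$. For $x\in V$: the link is $\mathcal{F}(x)=\{F\setminus\{x\}: x\in F\in\mathcal{F}\}$, $d_{\mathcal{F}}(x)=|\mathcal{F}(x)|$, $\delta(\mathcal{F})=\min_{x\in V}d_{\mathcal{F}}(x)$. For $A\subseteq V$, $d_{\mathcal{F}}(A)=|\{F\in\mathcal{F}: A\subseteq F\}|$. A set $F\in\mathcal{F}$ is maximal if no other member strictly contains it; a hereditary $\mathcal{F}$ with $\delta(\mathcal{F})\ge 12$ is minimal if $\delta(\mathcal{F}\setminus\{F\})\le 11$ for every maximal $F\in\mathcal{F}$. $f_i(x)$ denotes the number of $i$-element sets in $\mathcal{F}(x)$. A vertex $x$ is mini-weight if $f_1(x)=4$, $f_2(x)=5$, $f_3(x)=2$. $\mathcal{Q}=\{Q\in\mathcal{F}:|Q|=4\}$ and $\mathcal{Q}(x)=\{Q\in\mathcal{Q}: x\in Q\}$. Weights: for $x\in F\in\mathcal{F}$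 define $\omega(x,F)$ as follows. If $|F|\ne 3$, $\omega(x,F)=1/|F|$. If $|F|=3$: if $F$ is contained in some 4-element member of $\mathcal{F}$, every element of $F$ gets $\omega=1/3$; otherwise order the three 2-subsets of $F$ as $e_1,e_2,e_3$ with $d_{\mathcal{F}}(e_1)\le d_{\mathcal{F}}(e_2)\le d_{\mathcal{F}}(e_3)$; if $d_{\mathcal{F}}(e_2)\le 4<d_{\mathcal{F}}(e_3)$, the two elements of $e_3$ get $\omega=7/20$ and the element of $F\setminus e_3$ gets $6/20$; else if $d_{\mathcal{F}}(e_1)\le 4<d_{\mathcal{F}}(e_2)$, the two elements of $e_1$ get $7/20$ and the element of $F\setminus e_1$ gets $6/20$; otherwise every element of $F$ gets $1/3$. The weight of $x$ is $u(x)=\sum_{x\in F\in\mathcal{F}}\omega(x,F)$. *)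

theory Defs
  imports Complex_Main
begin

definition hereditary :: "'a set set \<Rightarrow> bool" where
  "hereditary \<F> \<longleftrightarrow> (\<forall>F F'. F \<in> \<F> \<and> F' \<subseteq> F \<longrightarrow> F' \<in> \<F>)"

definition link :: "'a set set \<Rightarrow> 'a \<Rightarrow> 'a set set" where
  "link \<F> x = {F - {x} | F. x \<in> F \<and> F \<in> \<F>}"

definition deg :: "'a set set \<Rightarrow> 'a \<Rightarrow> nat" where
  "deg \<F> x = card (link \<F> x)"

definition mindeg :: "'a set \<Rightarrow> 'a set set \<Rightarrow> nat" where
  "mindeg V \<F> = Min ((\<lambda>x. deg \<F> x) ` V)"

definition setdeg :: "'a set set \<Rightarrow> 'a set \<Rightarrow> nat" where
  "setdeg \<F> A = card {F \<in> \<F>. A \<subseteq> F}"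

definition maximal_in :: "'a set set \<Rightarrow> 'a set \<Rightarrow> bool" where
  "maximal_in \<F> F \<longleftrightarrow> F \<in> \<F> \<and> (\<forall>G \<in> \<F>. F \<subseteq> G \<longrightarrow> G = F)"

definition minimal_family :: "'a set \<Rightarrow> 'a set set \<Rightarrow> bool" where
  "minimal_family V \<F> \<longleftrightarrow> hereditary \<F> \<and> mindeg V \<F> \<ge> 12 \<and>
     (\<forall>F. maximal_in \<F> F \<longrightarrow> mindeg V (\<F> - {F}) \<le> 11)"

definition fcount :: "'a set set \<Rightarrow> nat \<Rightarrow> 'a \<Rightarrow> nat" where
  "fcount \<F> i x = card {S \<in> link \<F> x. card S = i}"

definition mini_weight :: "'a set set \<Rightarrow> 'a \<Rightarrow> bool" where
  "mini_weight \<F> x \<longleftrightarrow> fcount \<F> 1 x = 4 \<and> fcount \<F> 2 x = 5 \<and> fcount \<F> 3 x = 2"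

definition Qx :: "'a set set \<Rightarrow> 'a \<Rightarrow> 'a set set" where
  "Qx \<F> x = {Q \<in> \<F>. card Q = 4 \<and> x \<in> Q}"

definition pairs :: "'a set \<Rightarrow> 'a set set" where
  "pairs F = {e. e \<subseteq> F \<and> card e = 2}"

definition high_pairs :: "'a set set \<Rightarrow> 'a set \<Rightarrow> 'a set set" where
  "high_pairs \<F> F = {e \<in> pairs F. setdeg \<F> e > 4}"

(* With e1,e2,e3 sorted by d: "d(e2) <= 4 < d(e3)" iff exactly one pair is high
   (and then e3 is that pair); "d(e1) <= 4 < d(e2)" iff exactly two pairs are high
   (and then e1 is the unique low pair). *)
definition omega :: "'a set set \<Rightarrow> 'a \<Rightarrow> 'a set \<Rightarrow> real" where
  "omega \<F> x F =
    (if card F \<noteq> 3 then 1 / real (card F)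
     else if (\<exists>G \<in> \<F>. card G = 4 \<and> F \<subseteq> G) then 1/3
     else if card (high_pairs \<F> F) = 1 then
       (if x \<in> \<Union>(high_pairs \<F> F) then 7/20 else 6/20)
     else if card (high_pairs \<F> F) = 2 then
       (if x \<in> \<Union>(pairs F - high_pairs \<F> F) then 7/20 else 6/20)
     else 1/3)"

definition weight :: "'a set set \<Rightarrow> 'a \<Rightarrow> real" where
  "weight \<F> x = (\<Sum>F \<in> {F \<in> \<F>. x \<in> F}. omega \<F> x F)"

end

theory Submission
  imports Defs
begin

lemma pairs_card6:
  assumes "finite T" "card T = 4"
  shows "card {P. P \<subseteq> T \<and> card P = 2} = 6"
  using n_subsets[OF assms(1), of 2] assms(2) by (simp add: choose_two)

theorem mainTheorem6:
  fixes V :: "'a set" and \<F> :: "'a set set" and x :: 'a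
  assumes "finite V"
    and "\<F> \<subseteq> Pow V"
    and "minimal_family V \<F>"
    and "x \<in> V"
    and "mini_weight \<F> x"
  shows "card (Qx \<F> x) = 2 \<and>
         (\<forall>Q1 Q2. Qx \<F> x = {Q1, Q2} \<and> Q1 \<noteq> Q2 \<longrightarrow>
            card (Q1 \<inter> Q2) = 3 \<and>
            link \<F> x = {F - {x} | F. x \<in> F \<and> (F \<subseteq> Q1 \<or> F \<subseteq> Q2)}) \<and>
         weight \<F> x = 53/10 - 2/15"
proof -
  have her: "hereditary \<F>" using assms(3) unfolding minimal_family_def by blast
  have finF: "finite \<F>" using assms(1,2) by (meson finite_Pow_iff finite_subset)
  have finS: "\<And>S. S \<in> \<F> \<Longrightarrow> finite S" using assms(1,2) by (meson PowD finite_subset subsetD)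
  define L where "L = link \<F> x"
  have Lmem: "\<And>S. S \<in> L \<longleftrightarrow> x \<notin> S \<and> insert x S \<in> \<F>"
  proof
    fix S assume "S \<in> L"
    then obtain F where "S = F - {x}" "x \<in> F" "F \<in> \<F>" unfolding L_def link_def by blast
    then show "x \<notin> S \<and> insert x S \<in> \<F>" by (simp add: insert_absorb)
  next
    fix S assume "x \<notin> S \<and> insert x S \<in> \<F>"
    then have "S = insert x S - {x}" "x \<in> insert x S" "insert x S \<in> \<F>" by auto
    then show "S \<in> L" unfolding L_def link_def by blast
  qed
  have Lher: "\<And>S T. S \<in> L \<Longrightarrow> T \<subseteq> S \<Longrightarrow> T \<in> L"
  proof -
    fix S T assume "S \<in> L" "T \<subseteq> S"
    then have "x \<notin> T" "insert x T \<subseteq> insert x S" "insert x S \<in> \<F>" using Lmem by auto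
    then show "T \<in> L" using her Lmem unfolding hereditary_def by blast
  qed
  have finL: "finite L" unfolding L_def link_def using finF by simp
  have f1: "card {S \<in> L. card S = 1} = 4" and f2: "card {S \<in> L. card S = 2} = 5"
    and f3: "card {S \<in> L. card S = 3} = 2"
    using assms(5) unfolding mini_weight_def fcount_def L_def by auto
  define U where "U = {y. {y} \<in> L}"
  have "{S \<in> L. card S = 1} = (\<lambda>y. {y}) ` U" unfolding U_def
    by (auto simp: card_1_singleton_iff)
  moreover have "inj_on (\<lambda>y. {y}) U" by (simp add: inj_on_def)
  ultimately have cU: "card U = 4" using f1 card_image by metis
  then have finU: "finite U" by (metis card.infinite zero_neq_numeral)
  have LU: "\<And>S. S \<in> L \<Longrightarrow> S \<subseteq> U" unfolding U_def using Lher by blast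
  have le3: "\<And>S. S \<in> L \<Longrightarrow> card S \<le> 3"
  proof (rule ccontr)
    fix S assume S: "S \<in> L" "\<not> card S \<le> 3"
    have fS: "finite S" using LU[OF S(1)] finU finite_subset by blast
    obtain T where T: "T \<subseteq> S" "card T = 4" using obtain_subset_with_card_n[of 4 S] S(2) by force
    have fT: "finite T" using fS T(1) finite_subset by blast
    have "{P. P \<subseteq> T \<and> card P = 2} \<subseteq> {S \<in> L. card S = 2}"
    proof
      fix P assume "P \<in> {P. P \<subseteq> T \<and> card P = 2}"
      then have "P \<subseteq> S" "card P = 2" using T(1) by auto
      then show "P \<in> {S \<in> L. card S = 2}" using Lher[OF S(1)] by blast
    qed
    then have "card {P. P \<subseteq> T \<and> card P = 2} \<le> card {S \<in> L. card S = 2}"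
      using finL by (intro card_mono) auto
    then have "card {P. P \<subseteq> T \<and> card P = 2} \<le> 5" using f2 by simp
    then show False using pairs_card6[OF fT T(2)] by simp
  qed
  define PU where "PU = {P. P \<subseteq> U \<and> card P = 2}"
  have cPU: "card PU = 6" unfolding PU_def using pairs_card6[OF finU cU] .
  have finPU: "finite PU" unfolding PU_def using finU by simp
  have P2sub: "{S \<in> L. card S = 2} \<subseteq> PU" unfolding PU_def using LU by auto
  have "PU - {S \<in> L. card S = 2} \<noteq> {}"
  proof
    assume "PU - {S \<in> L. card S = 2} = {}"
    then have "PU = {S \<in> L. card S = 2}" using P2sub by blast
    then show False using cPU f2 by simp
  qed
  then obtain E where E: "E \<subseteq> U" "card E = 2" "E \<notin> L" unfolding PU_def by blast
  then obtain c d where cd: "E = {c, d}" "c \<noteq> d" by (meson card_2_iff)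
  have cdU: "c \<in> U" "d \<in> U" using E(1) cd by auto
  have P2eq: "{S \<in> L. card S = 2} = PU - {E}"
  proof (rule card_subset_eq)
    show "finite (PU - {E})" using finPU by simp
    show "{S \<in> L. card S = 2} \<subseteq> PU - {E}" using P2sub E(3) by blast
    have "E \<in> PU" unfolding PU_def using E by simp
    then show "card {S \<in> L. card S = 2} = card (PU - {E})" using f2 cPU finPU by simp
  qed
  define A where "A = U - {c}"
  define B where "B = U - {d}"
  have cA: "card A = 3" unfolding A_def using cU cdU finU by simp
  have cB: "card B = 3" unfolding B_def using cU cdU finU by simp
  have AB: "A \<noteq> B" unfolding A_def B_def using cdU cd by blast
  have trip: "\<And>T. T \<in> L \<Longrightarrow> card T = 3 \<Longrightarrow> T = A \<or> T = B"
  proof -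
    fix T assume T: "T \<in> L" "card T = 3"
    have TU: "T \<subseteq> U" using LU T(1) .
    have "card (U - T) = 1" using cU T(2) TU finU by (simp add: card_Diff_subset finite_subset)
    then obtain z where z: "U - T = {z}" using card_1_singleton_iff[of "U - T"] by auto
    then have Tz: "T = U - {z}" using TU by blast
    have "\<not> E \<subseteq> T" using Lher[OF T(1)] E(3) by blast
    then have "z = c \<or> z = d" using Tz cd cdU by blast
    then show "T = A \<or> T = B" using Tz A_def B_def by blast
  qed
  have P3: "{S \<in> L. card S = 3} = {A, B}"
  proof (rule card_subset_eq)
    show "finite {A, B}" by simp
    show "{S \<in> L. card S = 3} \<subseteq> {A, B}" using trip by blast
    show "card {S \<in> L. card S = 3} = card {A, B}" using f3 AB by simp
  qed
  have AL: "A \<in> L" and BL: "B \<in> L" using P3 by blast+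
  have Lchar: "\<And>S. S \<in> L \<longleftrightarrow> S \<subseteq> A \<or> S \<subseteq> B"
  proof
    fix S assume S: "S \<in> L"
    show "S \<subseteq> A \<or> S \<subseteq> B"
    proof (rule ccontr)
      assume "\<not> (S \<subseteq> A \<or> S \<subseteq> B)"
      then have "E \<subseteq> S" using LU[OF S] cd unfolding A_def B_def by blast
      then show False using Lher[OF S] E(3) by blast
    qed
  next
    fix S assume "S \<subseteq> A \<or> S \<subseteq> B"
    then show "S \<in> L" using Lher AL BL by blast
  qed
  have xA: "x \<notin> A" and xB: "x \<notin> B" using AL BL Lmem by auto
  have finA: "finite A" and finB: "finite B" using cA cB by (metis card.infinite zero_neq_numeral)+
  have Qeq: "Qx \<F> x = {insert x A, insert x B}"
  proof (rule set_eqI)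
    fix Q
    show "Q \<in> Qx \<F> x \<longleftrightarrow> Q \<in> {insert x A, insert x B}"
    proof
      assume "Q \<in> Qx \<F> x"
      then have Q: "Q \<in> \<F>" "card Q = 4" "x \<in> Q" unfolding Qx_def by auto
      have "Q - {x} \<in> L" using Q Lmem by (simp add: insert_absorb)
      moreover have "card (Q - {x}) = 3" using Q by simp
      ultimately have "Q - {x} = A \<or> Q - {x} = B" using trip by blast
      moreover have "Q = insert x (Q - {x})" using Q(3) by blast
      ultimately show "Q \<in> {insert x A, insert x B}" by (metis insertCI)
    next
      assume "Q \<in> {insert x A, insert x B}"
      moreover have "insert x A \<in> \<F>" "insert x B \<in> \<F>" using AL BL Lmem by blast+
      moreover have "card (insert x A) = 4" "card (insert x B) = 4" using xA xB cA cB finA finB by simp_all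
      ultimately show "Q \<in> Qx \<F> x" unfolding Qx_def by blast
    qed
  qed
  have neq: "insert x A \<noteq> insert x B" using AB xA xB by (metis Diff_insert_absorb)
  have part1: "card (Qx \<F> x) = 2" using Qeq neq by simp
  have cAB: "card (A \<inter> B) = 2"
  proof -
    have "A \<inter> B = U - {c, d}" unfolding A_def B_def by blast
    then show ?thesis using cU cdU cd finU by (simp add: card_Diff_subset)
  qed
  have part2: "\<forall>Q1 Q2. Qx \<F> x = {Q1, Q2} \<and> Q1 \<noteq> Q2 \<longrightarrow>
            card (Q1 \<inter> Q2) = 3 \<and>
            link \<F> x = {F - {x} | F. x \<in> F \<and> (F \<subseteq> Q1 \<or> F \<subseteq> Q2)}"
  proof (intro allI impI)
    fix Q1 Q2 assume H: "Qx \<F> x = {Q1, Q2} \<and> Q1 \<noteq> Q2"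
    then have HH: "(Q1 = insert x A \<and> Q2 = insert x B) \<or> (Q1 = insert x B \<and> Q2 = insert x A)"
      using Qeq by (metis doubleton_eq_iff)
    have i: "insert x A \<inter> insert x B = insert x (A \<inter> B)" by blast
    have "card (insert x (A \<inter> B)) = 3" using cAB xA finA by simp
    then have c3: "card (Q1 \<inter> Q2) = 3" using HH i by (metis inf_commute)
    have "L = {F - {x} | F. x \<in> F \<and> (F \<subseteq> insert x A \<or> F \<subseteq> insert x B)}"
    proof (rule set_eqI)
      fix S show "S \<in> L \<longleftrightarrow> S \<in> {F - {x} | F. x \<in> F \<and> (F \<subseteq> insert x A \<or> F \<subseteq> insert x B)}"
      proof
        assume S: "S \<in> L"
        then have "x \<notin> S" using Lmem by blast
        then have "S = insert x S - {x}" by simp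
        moreover have "insert x S \<subseteq> insert x A \<or> insert x S \<subseteq> insert x B" using S Lchar by blast
        ultimately show "S \<in> {F - {x} | F. x \<in> F \<and> (F \<subseteq> insert x A \<or> F \<subseteq> insert x B)}" by blast
      next
        assume "S \<in> {F - {x} | F. x \<in> F \<and> (F \<subseteq> insert x A \<or> F \<subseteq> insert x B)}"
        then obtain F where "S = F - {x}" "F \<subseteq> insert x A \<or> F \<subseteq> insert x B" by blast
        then have "S \<subseteq> A \<or> S \<subseteq> B" by blast
        then show "S \<in> L" using Lchar by blast
      qed
    qed
    then have "link \<F> x = {F - {x} | F. x \<in> F \<and> (F \<subseteq> Q1 \<or> F \<subseteq> Q2)}"
      unfolding L_def using HH by auto
    then show "card (Q1 \<inter> Q2) = 3 \<and>
            link \<F> x = {F - {x} | F. x \<in> F \<and> (F \<subseteq> Q1 \<or> F \<subseteq> Q2)}" using c3 by blast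
  qed
  have img: "{F \<in> \<F>. x \<in> F} = insert x ` L"
  proof (rule set_eqI)
    fix F show "F \<in> {F \<in> \<F>. x \<in> F} \<longleftrightarrow> F \<in> insert x ` L"
    proof
      assume "F \<in> {F \<in> \<F>. x \<in> F}"
      then have "F - {x} \<in> L" "F = insert x (F - {x})" using Lmem by (auto simp: insert_absorb)
      then show "F \<in> insert x ` L" by blast
    next
      assume "F \<in> insert x ` L"
      then obtain S where "S \<in> L" "F = insert x S" by blast
      then show "F \<in> {F \<in> \<F>. x \<in> F}" using Lmem by blast
    qed
  qed
  have injL: "inj_on (insert x) L"
    unfolding inj_on_def using Lmem by (metis Diff_insert_absorb)
  have finLS: "\<And>S. S \<in> L \<Longrightarrow> finite S" using LU finU finite_subset by blast
  have om: "\<And>S. S \<in> L \<Longrightarrow> omega \<F> x (insert x S) = 1 / (real (card S) + 1)"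
  proof -
    fix S assume S: "S \<in> L"
    have xS: "x \<notin> S" using S Lmem by blast
    have ci: "card (insert x S) = card S + 1" using xS finLS[OF S] by simp
    show "omega \<F> x (insert x S) = 1 / (real (card S) + 1)"
    proof (cases "card S = 2")
      case True
      have "S \<subseteq> A \<or> S \<subseteq> B" using S Lchar by blast
      moreover have "insert x A \<in> \<F>" "insert x B \<in> \<F>" "card (insert x A) = 4" "card (insert x B) = 4"
        using AL BL Lmem xA xB finA finB cA cB by auto
      ultimately have "\<exists>G \<in> \<F>. card G = 4 \<and> insert x S \<subseteq> G" by blast
      then show ?thesis unfolding omega_def using ci True by simp
    next
      case False
      then show ?thesis unfolding omega_def using ci by simp
    qed
  qed
  have "weight \<F> x = (\<Sum>S\<in>L. omega \<F> x (insert x S))"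
    unfolding weight_def img using sum.reindex[OF injL] by simp
  also have "\<dots> = (\<Sum>S\<in>L. 1 / (real (card S) + 1))" using om by simp
  also have "\<dots> = (\<Sum>k\<in>{0..3::nat}. (\<Sum>S\<in>{S. S \<in> L \<and> card S = k}. 1 / (real (card S) + 1)))"
    using sum.group[OF finL, of "{0..3::nat}" card "\<lambda>S. 1 / (real (card S) + 1)"] le3 by force
  also have "\<dots> = (\<Sum>k\<in>{0..3::nat}. real (card {S \<in> L. card S = k}) / (real k + 1))"
    by (rule sum.cong) auto
  also have "\<dots> = 31/6"
  proof -
    have "{S \<in> L. card S = 0} = {{}}" using Lher[OF AL] finLS by auto
    then have "card {S \<in> L. card S = 0} = 1" by simp
    then show ?thesis using f1 f2 f3 by (simp add: numeral_eq_Suc)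
  qed
  finally have "weight \<F> x = 53/10 - 2/15" by simp
  then show ?thesis using part1 part2 by blast
qed

end
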